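(* Let $A$ be an $n\times n$ binary matrix with zero diagonal and $\widetilde A=A+I_n$. The facets-pairing structure $\mathcal{F}_A$ on $\mathcal{C}^n$ is strong if and only if for all $1\le j_1<\dots<j_s\le n$ one has $\mathrm{rank}_{\mathbb{Z}_2}\big(\widetilde A^{j_1\cdots j_s}_{j_1\cdots j_s}\big)=\mathrm{rank}_{\mathbb{Z}_2}\big(\widetilde A^{j_1\cdots j_s}\big)$.
   Context: $\mathcal{C}^n=\{x\in\mathbb{R}^n: -\tfrac14\le x_i\le\tfrac14\}$; $\mathbf{F}(i)$, $\mathbf{F}(-i)$ ($1\le i\le n$) are the facets in $\{x_i=\tfrac14\}$, $\{x_i=-\tfrac14\}$. Binary matrices have entries in $\mathbb{Z}_2$; $A^i_k$ denotes the $(i,k)$ entry viewed as $0$ or $1$. For $1\le j_1<\dots<j_s\le n$, $\widetilde A^{j_1\cdots j_s}$ is the $s\times n$ submatrix of $\widetilde A$ formed by rows $j_1,\dots,j_s$, and $\widetilde A^{j_1\cdots j_s}_{j_1\cdots j_s}$ is the $s\times s$ principal submatrix on rows and columns $j_1,\dots,j_s$. $\mathcal{F}_A$ pairs $\mathbf{F}(j)$ with $\mathbf{F}(-j)$ via $\tau^A_j:\mathbf{F}(j)\to\mathbf{F}(-j)$, $\tau^A_j(x)=y$ with $y_{|j|}=-x_{|j|}$ and $y_k=(-1)^{A^{|j|}_k}x_k$ for $k\ne|j|$. A composition $\tau^A_{k_m}\circ\dots\circ\tau^A_{k_1}$ applied to a proper face $f$ is valid if $f\subset\mathbf{F}(k_1)$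 and $\tau^A_{k_i}\circ\dots\circ\tau^A_{k_1}(f)\subset\mathbf{F}(k_{i+1})$ for $1\le i<m$ ($m=0$ allowed, giving the identity). For a proper face $f$ let $\Xi(f)$ be the set of facets containing $f$; if $f\subset\mathbf{F}(k)$ and $f'=\tau^A_k(f)$, define $\Psi^f_k:\Xi(f)\to\Xi(f')$ by $\Psi^f_k(\mathbf{F}(k))=\mathbf{F}(-k)$ and, for $F'\in\Xi(f)\setminus\{\mathbf{F}(k)\}$, $\Psi^f_k(F')$ is the facet $G$ with $G\cap\mathbf{F}(-k)=\tau^A_k(F'\cap\mathbf{F}(k))$. $\mathcal{F}_A$ is strong if for every proper face $f$ and any two valid compositions mapping $f$ onto the same face $\widetilde f$: (a) they agree at every point of $f$; and (b) the corresponding composites of the maps $\Psi$ along the two compositions coincide as maps $\Xi(f)\to\Xi(\widetilde f)$. *)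

theory Defs
  imports "HOL-Library.Z2" "Jordan_Normal_Form.DL_Rank" "Jordan_Normal_Form.DL_Submatrix"
begin

text \<open>Points of R^n are functions nat => real, with coordinates 1..n
  (all other coordinates are 0).\<close>

definition cube :: "nat \<Rightarrow> (nat \<Rightarrow> real) set" where
  "cube n = {x. (\<forall>i\<in>{1..n}. -1/4 \<le> x i \<and> x i \<le> 1/4) \<and> (\<forall>i. i \<notin> {1..n} \<longrightarrow> x i = 0)}"

definition facet_idx :: "nat \<Rightarrow> int \<Rightarrow> bool" where
  "facet_idx n j \<longleftrightarrow> j \<noteq> 0 \<and> nat \<bar>j\<bar> \<le> n"

definition facet :: "nat \<Rightarrow> int \<Rightarrow> (nat \<Rightarrow> real) set" where
  "facet n j = {x \<in> cube n. x (nat \<bar>j\<bar>) = of_int (sgn j) / 4}"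

definition facets :: "nat \<Rightarrow> (nat \<Rightarrow> real) set set" where
  "facets n = facet n ` {j. facet_idx n j}"

text \<open>Proper (nonempty, not the whole cube) faces of the cube: fix a nonempty set D of
  coordinates to values +-1/4.\<close>
definition proper_face :: "nat \<Rightarrow> (nat \<Rightarrow> real) set \<Rightarrow> bool" where
  "proper_face n f \<longleftrightarrow> (\<exists>D s. D \<subseteq> {1..n} \<and> D \<noteq> {} \<and> (\<forall>i\<in>D. s i = (1::real) \<or> s i = -1) \<and>
      f = {x \<in> cube n. \<forall>i\<in>D. x i = s i / 4})"

text \<open>Entry A^i_k (1-based) of a binary matrix (Jordan_Normal_Form matrices are 0-based).\<close>
definition ent :: "bit mat \<Rightarrow> nat \<Rightarrow> nat \<Rightarrow> bit" where
  "ent A i k = A $$ (i - 1, k - 1)"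

definition tau :: "nat \<Rightarrow> bit mat \<Rightarrow> int \<Rightarrow> (nat \<Rightarrow> real) \<Rightarrow> (nat \<Rightarrow> real)" where
  "tau n A j x = (\<lambda>k. if k = nat \<bar>j\<bar> then - x k
      else if k \<in> {1..n} \<and> ent A (nat \<bar>j\<bar>) k = 1 then - x k else x k)"

text \<open>A composition tau_{k_m} o ... o tau_{k_1} is given by the list [k_1, ..., k_m].\<close>
fun valid_comp :: "nat \<Rightarrow> bit mat \<Rightarrow> int list \<Rightarrow> (nat \<Rightarrow> real) set \<Rightarrow> bool" where
  "valid_comp n A [] f = True"
| "valid_comp n A (k # ks) f =
     (facet_idx n k \<and> f \<subseteq> facet n k \<and> valid_comp n A ks (tau n A k ` f))"

fun comp_tau :: "nat \<Rightarrow> bit mat \<Rightarrow> int list \<Rightarrow> (nat \<Rightarrow> real) \<Rightarrow> (nat \<Rightarrow> real)" where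
  "comp_tau n A [] = id"
| "comp_tau n A (k # ks) = comp_tau n A ks \<circ> tau n A k"

definition Xi :: "nat \<Rightarrow> (nat \<Rightarrow> real) set \<Rightarrow> (nat \<Rightarrow> real) set set" where
  "Xi n f = {F \<in> facets n. f \<subseteq> F}"

text \<open>Psi^f_k (its value does not depend on f, only its domain Xi f does).\<close>
definition Psi :: "nat \<Rightarrow> bit mat \<Rightarrow> int \<Rightarrow> (nat \<Rightarrow> real) set \<Rightarrow> (nat \<Rightarrow> real) set" where
  "Psi n A k F' = (if F' = facet n k then facet n (-k)
     else (THE G. G \<in> facets n \<and> G \<inter> facet n (-k) = tau n A k ` (F' \<inter> facet n k)))"

fun comp_Psi :: "nat \<Rightarrow> bit mat \<Rightarrow> int list \<Rightarrow> (nat \<Rightarrow> real) set \<Rightarrow> (nat \<Rightarrow> real) set" where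
  "comp_Psi n A [] F = F"
| "comp_Psi n A (k # ks) F = comp_Psi n A ks (Psi n A k F)"

definition strong :: "nat \<Rightarrow> bit mat \<Rightarrow> bool" where
  "strong n A \<longleftrightarrow> (\<forall>f ks ks'. proper_face n f \<and> valid_comp n A ks f \<and> valid_comp n A ks' f
      \<and> comp_tau n A ks ` f = comp_tau n A ks' ` f \<longrightarrow>
        (\<forall>x\<in>f. comp_tau n A ks x = comp_tau n A ks' x) \<and>
        (\<forall>F\<in>Xi n f. comp_Psi n A ks F = comp_Psi n A ks' F))"

end

theory Submission
  imports Defs
begin

context vec_space begin
lemma maximal_span:
  assumes S: "S \<subseteq> carrier_vec n" and U: "maximal U (\<lambda>T. T \<subseteq> S \<and> lin_indpt T)"
  shows "S \<subseteq> span U"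
proof
  fix s assume s: "s \<in> S"
  have US: "U \<subseteq> S" and li: "lin_indpt U" using U unfolding maximal_def by auto
  show "s \<in> span U"
  proof (cases "s \<in> U")
    case True thus ?thesis using in_own_span[of U] US S by auto
  next
    case False
    have "lin_dep (U \<union> {s})"
    proof (rule ccontr)
      assume "\<not> lin_dep (U \<union> {s})"
      then have "U \<union> {s} = U" using U s US unfolding maximal_def by (metis Un_upper1 Un_insert_right insert_subset sup_bot.right_neutral)
      thus False using False by auto
    qed
    thus ?thesis using lin_dep_iff_in_span[of U s] US S s li False by auto
  qed
qed

lemma sep_vec:
  assumes Vs: "Vs \<subseteq> carrier_vec n" "finite Vs" "lin_indpt Vs" "w \<in> Vs"
  shows "\<exists>c \<in> carrier_vec n. c \<bullet> w \<noteq> 0 \<and> (\<forall>v\<in>Vs-{w}. c \<bullet> v = 0)"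
proof -
  let ?U = "Vs \<union> set (unit_vecs n)"
  let ?P = "\<lambda>T. T \<subseteq> ?U \<and> lin_indpt T"
  have Ucar: "?U \<subseteq> carrier_vec n" using Vs(1) unit_vecs_carrier by auto
  obtain B where B: "finite B" "maximal B ?P" "Vs \<subseteq> B"
    using maximal_exists_superset[of ?U ?P Vs] Vs by auto
  have BU: "B \<subseteq> ?U" and liB: "lin_indpt B" using B(2) unfolding maximal_def by auto
  have Bc: "B \<subseteq> carrier_vec n" using BU Ucar by auto
  have "?U \<subseteq> span B" by (rule maximal_span[OF Ucar B(2)])
  then have "set (unit_vecs n) \<subseteq> span B" by auto
  then have "span (set (unit_vecs n)) \<subseteq> span B"
    using span_is_subset[of "set (unit_vecs n)" "span B"] span_is_submodule[OF Bc] by auto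
  then have spanB: "span B = carrier_vec n"
    using span_unit_vecs_is_carrier span_is_subset2[OF Bc] by auto
  have basB: "basis B" unfolding basis_def using spanB liB Bc by auto
  have cardB: "card B = n" using dim_basis[OF B(1) basB] dim_is_n by simp
  obtain bs where bs: "set bs = B - {w}" "distinct bs" using finite_distinct_list[of "B - {w}"] B(1) by auto
  let ?cs = "w # bs"
  have wB: "w \<in> B" using B(3) Vs(4) by auto
  have cs: "set ?cs = B" "distinct ?cs" using bs wB by auto
  have lcs: "length ?cs = n" using distinct_card[OF cs(2)] cs(1) cardB by simp
  have csc: "set ?cs \<subseteq> carrier_vec n" using cs Bc by auto
  let ?Bm = "mat_of_cols n ?cs"
  have Bm: "?Bm \<in> carrier_mat n n" using lcs by auto
  have colsBm: "cols ?Bm = ?cs" using cols_mat_of_cols[OF csc] .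
  have "rank ?Bm = n" using lin_indpt_full_rank[OF Bm] colsBm cs liB by auto
  then have "det ?Bm \<noteq> 0" using det_rank_iff[OF Bm] by auto
  then have "det (?Bm\<^sup>T) \<noteq> 0" using det_transpose[OF Bm] by auto
  then have "?Bm\<^sup>T \<in> Units (ring_mat TYPE('a) n undefined)"
    using det_non_zero_imp_unit[of "?Bm\<^sup>T" n] Bm by auto
  then obtain P where P: "P \<in> carrier_mat n n" "?Bm\<^sup>T * P = 1\<^sub>m n"
    unfolding Units_def ring_mat_def by auto
  have n0: "0 < n" using lcs by auto
  define c where "c = P *\<^sub>v unit_vec n 0"
  have cc: "c \<in> carrier_vec n" unfolding c_def using P by auto
  have "?Bm\<^sup>T *\<^sub>v c = unit_vec n 0"
    unfolding c_def using assoc_mult_mat_vec[of "?Bm\<^sup>T" n n P n "unit_vec n 0"] P Bm by auto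
  then have key: "\<And>j. j < n \<Longrightarrow> ?cs ! j \<bullet> c = (if j = 0 then 1 else 0)"
  proof -
    fix j assume j: "j < n" and e: "?Bm\<^sup>T *\<^sub>v c = unit_vec n 0"
    have "(?Bm\<^sup>T *\<^sub>v c) $ j = row (?Bm\<^sup>T) j \<bullet> c" using j Bm by auto
    also have "row (?Bm\<^sup>T) j = col ?Bm j" using j Bm by auto
    also have "col ?Bm j = ?cs ! j" using j lcs colsBm cols_nth[of j ?Bm] Bm by (metis carrier_matD(2))
    finally show "?cs ! j \<bullet> c = (if j = 0 then 1 else 0)" using e j by auto
  qed
  show ?thesis
  proof (intro bexI conjI ballI)
    show "c \<bullet> w \<noteq> 0" using key[of 0] n0 comm_scalar_prod[OF cc, of w] Vs wB by auto
    fix v assume v: "v \<in> Vs - {w}"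
    then have "v \<in> set bs" using bs B(3) by auto
    then obtain j where j: "j < length bs" "bs ! j = v" by (auto simp: in_set_conv_nth)
    have "?cs ! Suc j \<bullet> c = 0" using key[of "Suc j"] j lcs by auto
    then show "c \<bullet> v = 0" using j comm_scalar_prod[OF cc, of v] v Vs(1) by auto
  qed (rule cc)
qed

lemma dim_span_eq_iff_orth:
  assumes S12: "S1 \<subseteq> S2" and S2: "S2 \<subseteq> carrier_vec n" "finite S2"
  shows "vectorspace.dim class_ring (span_vs S1) = vectorspace.dim class_ring (span_vs S2) \<longleftrightarrow>
    (\<forall>c\<in>carrier_vec n. (\<forall>w\<in>S1. c \<bullet> w = 0) \<longrightarrow> (\<forall>w\<in>S2. c \<bullet> w = 0))"
proof -
  have S1: "S1 \<subseteq> carrier_vec n" "finite S1" using S12 S2 finite_subset by auto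
  have li0: "lin_indpt {}"
    by (metis (no_types) empty_subsetI fin_dim finite_basis_exists subset_li_is_li vec_vs vectorspace.basis_def)
  obtain U1 where U1: "finite U1" "maximal U1 (\<lambda>T. T \<subseteq> S1 \<and> lin_indpt T)"
    using maximal_exists_superset[of S1 "\<lambda>T. T \<subseteq> S1 \<and> lin_indpt T" "{}"] S1 li0 by auto
  have U1S: "U1 \<subseteq> S1" "lin_indpt U1" using U1(2) unfolding maximal_def by auto
  obtain U2 where U2: "finite U2" "maximal U2 (\<lambda>T. T \<subseteq> S2 \<and> lin_indpt T)" "U1 \<subseteq> U2"
    using maximal_exists_superset[of S2 "\<lambda>T. T \<subseteq> S2 \<and> lin_indpt T" U1] S2 U1S S12 by auto
  have U2S: "U2 \<subseteq> S2" "lin_indpt U2" using U2(2) unfolding maximal_def by auto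
  have d1: "vectorspace.dim class_ring (span_vs S1) = card U1" using dim_span[OF S1(1) S1(2) U1(2)] .
  have d2: "vectorspace.dim class_ring (span_vs S2) = card U2" using dim_span[OF S2(1) S2(2) U2(2)] .
  have sp1: "S1 \<subseteq> span U1" using maximal_span[OF S1(1) U1(2)] .
  have sp2: "S2 \<subseteq> span U2" using maximal_span[OF S2(1) U2(2)] .
  have U1c: "U1 \<subseteq> carrier_vec n" using U1S S1 by auto
  have orth: "\<And>c w U. U \<subseteq> carrier_vec n \<Longrightarrow> c \<in> carrier_vec n \<Longrightarrow> (\<forall>u\<in>U. c \<bullet> u = 0) \<Longrightarrow> w \<in> span U \<Longrightarrow> c \<bullet> w = 0"
  proof -
    fix c w U assume "U \<subseteq> carrier_vec n" "c \<in> carrier_vec n" "\<forall>u\<in>U. c \<bullet> u = 0" "w \<in> span U"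
    then have "c \<in> orthogonal_complement U" unfolding orthogonal_complement_def by auto
    then have "c \<in> orthogonal_complement (span U)" using in_orthogonal_complement_span[OF \<open>U \<subseteq> carrier_vec n\<close>] by auto
    then show "c \<bullet> w = 0" using \<open>w \<in> span U\<close> unfolding orthogonal_complement_def by auto
  qed
  show ?thesis
  proof
    assume "vectorspace.dim class_ring (span_vs S1) = vectorspace.dim class_ring (span_vs S2)"
    then have "card U1 = card U2" using d1 d2 by simp
    then have "U1 = U2" using card_subset_eq[OF U2(1) U2(3)] by simp
    then have S2sp: "S2 \<subseteq> span U1" using sp2 by simp
    show "\<forall>c\<in>carrier_vec n. (\<forall>w\<in>S1. c \<bullet> w = 0) \<longrightarrow> (\<forall>w\<in>S2. c \<bullet> w = 0)"
    proof (intro ballI impI)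
      fix c w assume c: "c \<in> carrier_vec n" and h: "\<forall>w\<in>S1. c \<bullet> w = 0" and w: "w \<in> S2"
      show "c \<bullet> w = 0" using orth[OF U1c c, of w] h U1S S2sp w by auto
    qed
  next
    assume H: "\<forall>c\<in>carrier_vec n. (\<forall>w\<in>S1. c \<bullet> w = 0) \<longrightarrow> (\<forall>w\<in>S2. c \<bullet> w = 0)"
    show "vectorspace.dim class_ring (span_vs S1) = vectorspace.dim class_ring (span_vs S2)"
    proof (rule ccontr)
      assume "vectorspace.dim class_ring (span_vs S1) \<noteq> vectorspace.dim class_ring (span_vs S2)"
      then have "U1 \<noteq> U2" using d1 d2 by auto
      then obtain w where w: "w \<in> U2" "w \<notin> U1" using U2(3) by auto
      have U2c: "U2 \<subseteq> carrier_vec n" using U2S S2 by auto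
      obtain c where c: "c \<in> carrier_vec n" "c \<bullet> w \<noteq> 0" "\<forall>v\<in>U2-{w}. c \<bullet> v = 0"
        using sep_vec[OF U2c U2(1) U2S(2) w(1)] by auto
      have "\<forall>u\<in>U1. c \<bullet> u = 0" using c(3) U2(3) w(2) by auto
      then have "\<forall>w\<in>S1. c \<bullet> w = 0" using orth[OF U1c c(1)] sp1 by auto
      then have "c \<bullet> w = 0" using H c(1) w(1) U2S by auto
      then show False using c(2) by simp
    qed
  qed
qed

lemma rank_eq_iff_orth:
  assumes "M1 \<in> carrier_mat n k1" "M2 \<in> carrier_mat n k2" "set (cols M1) \<subseteq> set (cols M2)"
  shows "rank M1 = rank M2 \<longleftrightarrow>
    (\<forall>c\<in>carrier_vec n. (\<forall>w\<in>set (cols M1). c \<bullet> w = 0) \<longrightarrow> (\<forall>w\<in>set (cols M2). c \<bullet> w = 0))"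
  unfolding rank_def
  by (rule dim_span_eq_iff_orth[OF assms(3)]) (use assms(2) cols_dim in blast)+
end

lemma pick_bij:
  assumes "finite J"
  shows "bij_betw (pick J) {0..<card J} J"
proof -
  have inj: "inj_on (pick J) {0..<card J}"
  proof (rule inj_onI)
    fix a b assume a: "a \<in> {0..<card J}" and b: "b \<in> {0..<card J}" and e: "pick J a = pick J b"
    show "a = b"
    proof (rule ccontr)
      assume "a \<noteq> b"
      then consider "a < b" | "b < a" by linarith
      then show False
      proof cases
        case 1 then show False using pick_mono[of b J a] b e by auto
      next
        case 2 then show False using pick_mono[of a J b] a e by auto
      qed
    qed
  qed
  have img: "pick J ` {0..<card J} = J"
  proof
    show "pick J ` {0..<card J} \<subseteq> J" using pick_in_set by auto
    show "J \<subseteq> pick J ` {0..<card J}"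
    proof
      fix j assume j: "j \<in> J"
      have "{a\<in>J. a < j} \<subset> J" using j by auto
      then have "card {a\<in>J. a < j} < card J" using assms psubset_card_mono by blast
      then have "card {a\<in>J. a < j} \<in> {0..<card J}" by simp
      moreover have "pick J (card {a\<in>J. a < j}) = j" using pick_card_in_set[OF j] .
      ultimately show "j \<in> pick J ` {0..<card J}" by (metis image_eqI)
    qed
  qed
  show ?thesis using inj img unfolding bij_betw_def by auto
qed

lemma pick_lessThan: "b < n \<Longrightarrow> pick {..<n} b = b"
proof -
  assume b: "b < n"
  have "{a \<in> {..<n}. a < b} = {..<b}" using b by auto
  then have "card {a \<in> {..<n}. a < b} = b" by simp
  then show ?thesis using pick_card_in_set[of b "{..<n}"] b by simp
qed

lemma idx_pick: "a < card J \<Longrightarrow> card {x\<in>J. x < pick J a} = a"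
  using card_pick by auto

lemma sum_pick:
  assumes "finite J"
  shows "(\<Sum>a\<in>{0..<card J}. g (pick J a)) = (\<Sum>j\<in>J. g j)"
  using sum.reindex_bij_betw[OF pick_bij[OF assms]] .

context
  fixes n :: nat and At :: "'a::field mat" and J :: "nat set"
  assumes At: "At \<in> carrier_mat n n" and J: "J \<subseteq> {..<n}"
begin

lemma finJ: "finite J" using J finite_subset by blast

lemma cardJ: "card {i. i < n \<and> i \<in> J} = card J"
proof -
  have "{i. i < n \<and> i \<in> J} = J" using J by auto
  then show ?thesis by simp
qed

lemma M1_carrier: "submatrix At J J \<in> carrier_mat (card J) (card J)"
  unfolding carrier_mat_def using dim_submatrix[of At J J] At cardJ by auto

lemma card_lt: "card {j. j < n \<and> j \<in> {..<n}} = n" by simp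

lemma M2_carrier: "submatrix At J {..<n} \<in> carrier_mat (card J) n"
  unfolding carrier_mat_def using dim_submatrix[of At J "{..<n}"] At cardJ by auto

lemma col_M2: "b < n \<Longrightarrow> col (submatrix At J {..<n}) b = vec (card J) (\<lambda>a. At $$ (pick J a, b))"
proof -
  assume b: "b < n"
  show ?thesis
  proof (rule eq_vecI)
    show "dim_vec (col (submatrix At J {..<n}) b) = dim_vec (vec (card J) (\<lambda>a. At $$ (pick J a, b)))"
      using M2_carrier by auto
    fix a assume "a < dim_vec (vec (card J) (\<lambda>a. At $$ (pick J a, b)))"
    then have a: "a < card J" by auto
    have "col (submatrix At J {..<n}) b $ a = submatrix At J {..<n} $$ (a, b)"
      using a b M2_carrier by auto
    also have "\<dots> = At $$ (pick J a, pick {..<n} b)"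
      using submatrix_index[of a At J b "{..<n}"] a b At cardJ by auto
    finally show "col (submatrix At J {..<n}) b $ a = vec (card J) (\<lambda>a. At $$ (pick J a, b)) $ a"
      using pick_lessThan[OF b] a by auto
  qed
qed

lemma col_M1: "b < card J \<Longrightarrow> col (submatrix At J J) b = col (submatrix At J {..<n}) (pick J b)"
proof -
  assume b: "b < card J"
  have pb: "pick J b < n" "pick J b \<in> J" using pick_in_set[of b J] b J by auto
  show ?thesis
  proof (rule eq_vecI)
    show "dim_vec (col (submatrix At J J) b) = dim_vec (col (submatrix At J {..<n}) (pick J b))"
      using M1_carrier M2_carrier by auto
    fix a assume "a < dim_vec (col (submatrix At J {..<n}) (pick J b))"
    then have a: "a < card J" using M2_carrier by auto
    have "col (submatrix At J J) b $ a = submatrix At J J $$ (a, b)"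
      using a b M1_carrier by auto
    also have "\<dots> = At $$ (pick J a, pick J b)"
      using submatrix_index[of a At J b J] a b At cardJ by auto
    finally show "col (submatrix At J J) b $ a = col (submatrix At J {..<n}) (pick J b) $ a"
      using col_M2[OF pb(1)] a by auto
  qed
qed

lemma cols_M1: "set (cols (submatrix At J J)) = (\<lambda>b. col (submatrix At J {..<n}) b) ` J"
proof -
  have "set (cols (submatrix At J J)) = (\<lambda>b. col (submatrix At J J) b) ` {0..<card J}"
    using M1_carrier unfolding cols_def by auto
  also have "\<dots> = (\<lambda>b. col (submatrix At J {..<n}) (pick J b)) ` {0..<card J}"
    using col_M1 by auto
  also have "\<dots> = (\<lambda>b. col (submatrix At J {..<n}) b) ` J"
    using bij_betw_imp_surj_on[OF pick_bij[OF finJ]] by (metis image_image)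
  finally show ?thesis .
qed

lemma cols_M2: "set (cols (submatrix At J {..<n})) = (\<lambda>b. col (submatrix At J {..<n}) b) ` {..<n}"
  using M2_carrier unfolding cols_def by (auto simp: atLeast0LessThan)

lemma scalar_col_M2:
  assumes c: "c \<in> carrier_vec (card J)" and b: "b < n"
  shows "c \<bullet> col (submatrix At J {..<n}) b = (\<Sum>j\<in>J. c $ card {x\<in>J. x < j} * At $$ (j, b))"
proof -
  have "c \<bullet> col (submatrix At J {..<n}) b = (\<Sum>a\<in>{0..<card J}. c $ a * At $$ (pick J a, b))"
    unfolding col_M2[OF b] scalar_prod_def by simp
  also have "\<dots> = (\<Sum>a\<in>{0..<card J}. c $ card {x\<in>J. x < pick J a} * At $$ (pick J a, b))"
    by (rule sum.cong) (auto simp: idx_pick)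
  also have "\<dots> = (\<Sum>j\<in>J. c $ card {x\<in>J. x < j} * At $$ (j, b))"
    using sum_pick[OF finJ, of "\<lambda>j. c $ card {x\<in>J. x < j} * At $$ (j, b)"] by simp
  finally show ?thesis .
qed

lemma rank_eq_iff_fun:
  "vec_space.rank (card J) (submatrix At J J) = vec_space.rank (card J) (submatrix At J {..<n}) \<longleftrightarrow>
   (\<forall>c::nat \<Rightarrow> 'a. (\<forall>b\<in>J. (\<Sum>j\<in>J. c j * At $$ (j, b)) = 0) \<longrightarrow> (\<forall>b<n. (\<Sum>j\<in>J. c j * At $$ (j, b)) = 0))"
proof -
  have sub: "set (cols (submatrix At J J)) \<subseteq> set (cols (submatrix At J {..<n}))"
    unfolding cols_M1 cols_M2 using J by auto
  have R: "vec_space.rank (card J) (submatrix At J J) = vec_space.rank (card J) (submatrix At J {..<n}) \<longleftrightarrow>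
    (\<forall>c\<in>carrier_vec (card J). (\<forall>b\<in>J. c \<bullet> col (submatrix At J {..<n}) b = 0) \<longrightarrow>
        (\<forall>b<n. c \<bullet> col (submatrix At J {..<n}) b = 0))"
    using vec_space.rank_eq_iff_orth[OF M1_carrier M2_carrier sub] unfolding cols_M1 cols_M2 by auto
  show ?thesis
    unfolding R
  proof (intro iffI allI ballI impI)
    fix c :: "nat \<Rightarrow> 'a" and b
    assume H: "\<forall>c\<in>carrier_vec (card J). (\<forall>b\<in>J. c \<bullet> col (submatrix At J {..<n}) b = 0) \<longrightarrow>
        (\<forall>b<n. c \<bullet> col (submatrix At J {..<n}) b = 0)"
      and h: "\<forall>b\<in>J. (\<Sum>j\<in>J. c j * At $$ (j, b)) = 0" and b: "b < n"
    define cv where "cv = vec (card J) (\<lambda>a. c (pick J a))"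
    have cv: "cv \<in> carrier_vec (card J)" unfolding cv_def by simp
    have eq: "\<And>b. b < n \<Longrightarrow> cv \<bullet> col (submatrix At J {..<n}) b = (\<Sum>j\<in>J. c j * At $$ (j, b))"
    proof -
      fix b assume b: "b < n"
      have "cv \<bullet> col (submatrix At J {..<n}) b = (\<Sum>j\<in>J. cv $ card {x\<in>J. x < j} * At $$ (j, b))"
        by (rule scalar_col_M2[OF cv b])
      also have "\<dots> = (\<Sum>j\<in>J. c j * At $$ (j, b))"
      proof (rule sum.cong)
        fix j assume j: "j \<in> J"
        have "{x\<in>J. x < j} \<subset> J" using j by auto
        then have lt: "card {x\<in>J. x < j} < card J" using finJ psubset_card_mono by blast
        show "cv $ card {x\<in>J. x < j} * At $$ (j, b) = c j * At $$ (j, b)"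
          unfolding cv_def using lt pick_card_in_set[OF j] by (simp del: pick.simps)
      qed simp
      finally show "cv \<bullet> col (submatrix At J {..<n}) b = (\<Sum>j\<in>J. c j * At $$ (j, b))" .
    qed
    have "\<forall>b\<in>J. cv \<bullet> col (submatrix At J {..<n}) b = 0" using h eq J by (metis lessThan_iff subsetD)
    then have "cv \<bullet> col (submatrix At J {..<n}) b = 0" using H[rule_format, OF cv] b by blast
    then show "(\<Sum>j\<in>J. c j * At $$ (j, b)) = 0" using eq[OF b] by simp
  next
    fix c b
    assume H: "\<forall>c::nat \<Rightarrow> 'a. (\<forall>b\<in>J. (\<Sum>j\<in>J. c j * At $$ (j, b)) = 0) \<longrightarrow> (\<forall>b<n. (\<Sum>j\<in>J. c j * At $$ (j, b)) = 0)"
      and c: "c \<in> carrier_vec (card J)"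
      and h: "\<forall>b\<in>J. c \<bullet> col (submatrix At J {..<n}) b = 0" and b: "b < n"
    let ?c = "\<lambda>j. c $ card {x\<in>J. x < j}"
    have "\<forall>b\<in>J. (\<Sum>j\<in>J. ?c j * At $$ (j, b)) = 0"
    proof
      fix b' assume b': "b' \<in> J"
      then have "b' < n" using J by auto
      then have "c \<bullet> col (submatrix At J {..<n}) b' = (\<Sum>j\<in>J. ?c j * At $$ (j, b'))" by (rule scalar_col_M2[OF c])
      then show "(\<Sum>j\<in>J. ?c j * At $$ (j, b')) = 0" using h b' by simp
    qed
    moreover have "(\<forall>b\<in>J. (\<Sum>j\<in>J. ?c j * At $$ (j, b)) = 0) \<longrightarrow> (\<forall>b<n. (\<Sum>j\<in>J. ?c j * At $$ (j, b)) = 0)"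
      by (rule spec[OF H])
    ultimately have "(\<Sum>j\<in>J. ?c j * At $$ (j, b)) = 0" using b by blast
    then show "c \<bullet> col (submatrix At J {..<n}) b = 0" using scalar_col_M2[OF c b] by simp
  qed
qed

end



definition flipv :: "nat \<Rightarrow> (nat \<Rightarrow> bit) \<Rightarrow> (nat \<Rightarrow> real) \<Rightarrow> (nat \<Rightarrow> real)" where
  "flipv n v x = (\<lambda>k. if k \<in> {1..n} \<and> v k = 1 then - x k else x k)"

definition rv :: "bit mat \<Rightarrow> nat \<Rightarrow> nat \<Rightarrow> bit" where
  "rv A r = (\<lambda>k. if k = r then 1 else ent A r k)"

fun svn :: "bit mat \<Rightarrow> nat list \<Rightarrow> nat \<Rightarrow> bit" where
  "svn A [] = (\<lambda>_. 0)"
| "svn A (d # ds) = (\<lambda>k. rv A d k + svn A ds k)"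

definition face :: "nat \<Rightarrow> nat set \<Rightarrow> (nat \<Rightarrow> real) \<Rightarrow> (nat \<Rightarrow> real) set" where
  "face n D s = {x \<in> cube n. \<forall>i\<in>D. x i = s i / 4}"

definition sgnok :: "nat set \<Rightarrow> (nat \<Rightarrow> real) \<Rightarrow> bool" where
  "sgnok D s \<longleftrightarrow> (\<forall>i\<in>D. s i = 1 \<or> s i = -1)"

definition fs :: "(nat \<Rightarrow> bit) \<Rightarrow> (nat \<Rightarrow> real) \<Rightarrow> nat \<Rightarrow> real" where
  "fs v s = (\<lambda>i. if v i = 1 then - s i else s i)"

definition flipi :: "(nat \<Rightarrow> bit) \<Rightarrow> int \<Rightarrow> int" where
  "flipi v i = (if v (nat \<bar>i\<bar>) = 1 then - i else i)"

definition pt :: "nat \<Rightarrow> nat set \<Rightarrow> (nat \<Rightarrow> real) \<Rightarrow> real \<Rightarrow> nat \<Rightarrow> real" where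
  "pt n D s t = (\<lambda>i. if i \<in> D then s i / 4 else if i \<in> {1..n} then t else 0)"

lemma facet_idx_range: "facet_idx n j \<Longrightarrow> nat \<bar>j\<bar> \<in> {1..n}"
  unfolding facet_idx_def by auto

lemma tau_eq: "facet_idx n j \<Longrightarrow> tau n A j = flipv n (rv A (nat \<bar>j\<bar>))"
  using facet_idx_range[of n j] unfolding tau_def flipv_def rv_def by (auto simp: fun_eq_iff)

lemma bit_cases2: "(v::bit) = 0 \<or> v = 1" by (cases v) auto

lemma flipv_flipv: "flipv n v (flipv n w x) = flipv n (\<lambda>k. v k + w k) x"
proof (rule ext)
  fix k show "flipv n v (flipv n w x) k = flipv n (\<lambda>k. v k + w k) x k"
    unfolding flipv_def by (cases "v k"; cases "w k") auto
qed

lemma flipv_zero: "flipv n (\<lambda>_. 0) = id"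
  unfolding flipv_def by (auto simp: fun_eq_iff)

lemma comp_tau_eq:
  "(\<forall>k\<in>set ks. facet_idx n k) \<Longrightarrow> comp_tau n A ks = flipv n (svn A (map (\<lambda>k. nat \<bar>k\<bar>) ks))"
proof (induction ks)
  case Nil then show ?case by (simp add: flipv_zero)
next
  case (Cons k ks)
  then have "comp_tau n A (k # ks) = flipv n (svn A (map (\<lambda>k. nat \<bar>k\<bar>) ks)) \<circ> flipv n (rv A (nat \<bar>k\<bar>))"
    using tau_eq[of n k A] by simp
  also have "\<dots> = flipv n (\<lambda>i. svn A (map (\<lambda>k. nat \<bar>k\<bar>) ks) i + rv A (nat \<bar>k\<bar>) i)"
    by (simp add: fun_eq_iff flipv_flipv del: add_bit_eq_xor)
  also have "(\<lambda>i. svn A (map (\<lambda>k. nat \<bar>k\<bar>) ks) i + rv A (nat \<bar>k\<bar>) i) = svn A (map (\<lambda>k. nat \<bar>k\<bar>) (k # ks))"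
    by (simp add: fun_eq_iff add.commute del: add_bit_eq_xor)
  finally show ?case .
qed

lemma pt_face:
  assumes "D \<subseteq> {1..n}" "sgnok D s" "\<bar>t\<bar> \<le> 1/4"
  shows "pt n D s t \<in> face n D s"
  using assms unfolding pt_def face_def cube_def sgnok_def by (auto split: if_splits)

lemma face_ne: "D \<subseteq> {1..n} \<Longrightarrow> sgnok D s \<Longrightarrow> face n D s \<noteq> {}"
  using pt_face[of D n s 0] by auto

lemma face_sub_facet:
  assumes D: "D \<subseteq> {1..n}" "sgnok D s" and k: "facet_idx n k"
  shows "face n D s \<subseteq> facet n k \<longleftrightarrow> nat \<bar>k\<bar> \<in> D \<and> s (nat \<bar>k\<bar>) = of_int (sgn k)"
proof
  assume h: "face n D s \<subseteq> facet n k"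
  have "pt n D s 0 \<in> facet n k" using h pt_face[OF D, of 0] by auto
  then have e: "pt n D s 0 (nat \<bar>k\<bar>) = of_int (sgn k) / 4" unfolding facet_def by auto
  have "sgn k \<noteq> 0" using k unfolding facet_idx_def by (simp add: sgn_eq_0_iff)
  then have "nat \<bar>k\<bar> \<in> D" using e facet_idx_range[OF k] unfolding pt_def by (auto split: if_splits)
  then show "nat \<bar>k\<bar> \<in> D \<and> s (nat \<bar>k\<bar>) = of_int (sgn k)" using e unfolding pt_def by auto
next
  assume "nat \<bar>k\<bar> \<in> D \<and> s (nat \<bar>k\<bar>) = of_int (sgn k)"
  then show "face n D s \<subseteq> facet n k" unfolding face_def facet_def by auto
qed

lemma face_eq:
  assumes D: "D \<subseteq> {1..n}" "sgnok D s" and D': "D' \<subseteq> {1..n}" "sgnok D' s'"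
    and e: "face n D s = face n D' s'"
  shows "D = D' \<and> (\<forall>i\<in>D. s i = s' i)"
proof -
  have p1: "pt n D s 0 \<in> face n D' s'" using e pt_face[OF D, of 0] by auto
  have p2: "pt n D' s' 0 \<in> face n D s" using e pt_face[OF D', of 0] by auto
  have "D' \<subseteq> D"
  proof
    fix i assume i: "i \<in> D'"
    then have "pt n D s 0 i = s' i / 4" using p1 unfolding face_def by auto
    moreover have "s' i \<noteq> 0" using D'(2) i unfolding sgnok_def by auto
    ultimately show "i \<in> D" unfolding pt_def by (auto split: if_splits)
  qed
  moreover have "D \<subseteq> D'"
  proof
    fix i assume i: "i \<in> D"
    then have "pt n D' s' 0 i = s i / 4" using p2 unfolding face_def by auto
    moreover have "s i \<noteq> 0" using D(2) i unfolding sgnok_def by auto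
    ultimately show "i \<in> D'" unfolding pt_def by (auto split: if_splits)
  qed
  ultimately have DD: "D = D'" by auto
  have "\<forall>i\<in>D. s i = s' i"
  proof
    fix i assume i: "i \<in> D"
    then have "pt n D s 0 i = s' i / 4" using p1 DD unfolding face_def by auto
    then show "s i = s' i" using i unfolding pt_def by auto
  qed
  then show ?thesis using DD by auto
qed

lemma face_cong: "(\<forall>i\<in>D. s i = s' i) \<Longrightarrow> face n D s = face n D s'"
  unfolding face_def by auto

lemma sgnok_fs: "sgnok D s \<Longrightarrow> sgnok D (fs v s)"
  unfolding sgnok_def fs_def by auto

lemma flipv_cube: "x \<in> cube n \<Longrightarrow> flipv n v x \<in> cube n"
  unfolding cube_def flipv_def by auto

lemma flipv_invol: "flipv n v (flipv n v x) = x"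
  unfolding flipv_def by auto

lemma flip_face:
  assumes D: "D \<subseteq> {1..n}"
  shows "flipv n v ` face n D s = face n D (fs v s)"
proof
  show "flipv n v ` face n D s \<subseteq> face n D (fs v s)"
  proof
    fix y assume "y \<in> flipv n v ` face n D s"
    then obtain x where x: "x \<in> face n D s" "y = flipv n v x" by auto
    show "y \<in> face n D (fs v s)"
      using x D flipv_cube[of x n v] unfolding face_def fs_def by (auto simp: flipv_def)
  qed
  show "face n D (fs v s) \<subseteq> flipv n v ` face n D s"
  proof
    fix y assume y: "y \<in> face n D (fs v s)"
    have "flipv n v y \<in> face n D s"
      using y D flipv_cube[of y n v] unfolding face_def fs_def by (auto simp: flipv_def)
    then show "y \<in> flipv n v ` face n D s" using flipv_invol[of n v y] by (metis image_eqI)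
  qed
qed

lemma flip_id_face:
  assumes D: "D \<subseteq> {1..n}" "sgnok D s" and h: "\<forall>x\<in>face n D s. flipv n v x = x"
  shows "\<forall>i\<in>{1..n}. v i = 0"
proof
  fix i assume i: "i \<in> {1..n}"
  have p: "pt n D s (1/4) \<in> face n D s" using pt_face[OF D, of "1/4"] by auto
  have nz: "pt n D s (1/4) i \<noteq> 0" using i D(2) unfolding pt_def sgnok_def by auto
  have "flipv n v (pt n D s (1/4)) i = pt n D s (1/4) i" using h p by auto
  then show "v i = 0" using nz i unfolding flipv_def by (cases "v i") auto
qed

lemma valid_idx:
  assumes "D \<subseteq> {1..n}" "sgnok D s" "valid_comp n A ks (face n D s)"
  shows "\<forall>k\<in>set ks. facet_idx n k \<and> nat \<bar>k\<bar> \<in> D"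
  using assms
proof (induction ks arbitrary: s)
  case Nil then show ?case by simp
next
  case (Cons k ks)
  have k: "facet_idx n k" "face n D s \<subseteq> facet n k"
    and v: "valid_comp n A ks (tau n A k ` face n D s)" using Cons.prems by auto
  have "nat \<bar>k\<bar> \<in> D" using face_sub_facet[OF Cons.prems(1,2) k(1)] k(2) by auto
  moreover have "tau n A k ` face n D s = face n D (fs (rv A (nat \<bar>k\<bar>)) s)"
    using tau_eq[OF k(1)] flip_face[OF Cons.prems(1)] by simp
  ultimately show ?case using Cons.IH[of "fs (rv A (nat \<bar>k\<bar>)) s"] Cons.prems(1,2) k(1) v sgnok_fs by auto
qed

lemma valid_exists:
  assumes "D \<subseteq> {1..n}" "sgnok D s" "set ds \<subseteq> D"
  shows "\<exists>ks. valid_comp n A ks (face n D s) \<and> map (\<lambda>k. nat \<bar>k\<bar>) ks = ds"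
  using assms
proof (induction ds arbitrary: s)
  case Nil
  show ?case by (rule exI[of _ "[]"]) simp
next
  case (Cons d ds)
  define k where "k = (if s d = 1 then int d else - int d)"
  have d: "d \<in> D" "d \<in> {1..n}" using Cons.prems by auto
  have kd: "nat \<bar>k\<bar> = d" unfolding k_def by auto
  have kidx: "facet_idx n k" using d kd unfolding facet_idx_def k_def by auto
  have sk: "s d = of_int (sgn k)" using Cons.prems(2) d unfolding sgnok_def k_def by auto
  have sub: "face n D s \<subseteq> facet n k" using face_sub_facet[OF Cons.prems(1,2) kidx] kd d sk by auto
  have img: "tau n A k ` face n D s = face n D (fs (rv A d) s)"
    using tau_eq[OF kidx] flip_face[OF Cons.prems(1)] kd by simp
  obtain ks where ks: "valid_comp n A ks (face n D (fs (rv A d) s))" "map (\<lambda>k. nat \<bar>k\<bar>) ks = ds"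
    using Cons.IH[of "fs (rv A d) s"] Cons.prems sgnok_fs by auto
  show ?case
    by (rule exI[of _ "k # ks"]) (use kidx sub img ks kd in auto)
qed


lemma facet_as_face: "facet n j = face n {nat \<bar>j\<bar>} (\<lambda>_. of_int (sgn j))"
  unfolding facet_def face_def by auto

lemma sgnok_sgn: "j \<noteq> 0 \<Longrightarrow> sgnok D (\<lambda>_. of_int (sgn j))"
  unfolding sgnok_def by (cases "j > 0") auto

lemma int_eq_sgn: "(i::int) \<noteq> 0 \<Longrightarrow> k \<noteq> 0 \<Longrightarrow> nat \<bar>i\<bar> = nat \<bar>k\<bar> \<Longrightarrow> (of_int (sgn i) :: real) = of_int (sgn k) \<Longrightarrow> i = k"
  by (cases "i > 0"; cases "k > 0") auto

lemma facet_inj: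
  assumes i: "facet_idx n i" and k: "facet_idx n k" and e: "facet n i = facet n k"
  shows "i = k"
proof -
  have "{nat \<bar>i\<bar>} = {nat \<bar>k\<bar>} \<and> (\<forall>m\<in>{nat \<bar>i\<bar>}. (of_int (sgn i)::real) = of_int (sgn k))"
    using face_eq[of "{nat \<bar>i\<bar>}" n "\<lambda>_. of_int (sgn i)" "{nat \<bar>k\<bar>}" "\<lambda>_. of_int (sgn k)"]
      e facet_as_face[of n i] facet_as_face[of n k] facet_idx_range[OF i] facet_idx_range[OF k]
      sgnok_sgn i k unfolding facet_idx_def by auto
  then show ?thesis using int_eq_sgn[of i k] i k unfolding facet_idx_def by auto
qed

lemma facet_inter:
  assumes "nat \<bar>i\<bar> \<noteq> nat \<bar>k\<bar>"
  shows "facet n i \<inter> facet n k = face n {nat \<bar>i\<bar>, nat \<bar>k\<bar>}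
     (\<lambda>m. if m = nat \<bar>i\<bar> then of_int (sgn i) else of_int (sgn k))"
  using assms unfolding facet_def face_def by auto

lemma sgnok2: "i \<noteq> 0 \<Longrightarrow> k \<noteq> 0 \<Longrightarrow> sgnok D (\<lambda>m. if m = a then of_int (sgn i) else of_int (sgn k))"
  unfolding sgnok_def by (cases "i > 0"; cases "k > 0") auto

lemma facet_idx_neg: "facet_idx n k \<Longrightarrow> facet_idx n (-k)"
  unfolding facet_idx_def by auto

lemma facet_idx_flipi: "facet_idx n i \<Longrightarrow> facet_idx n (flipi v i)"
  unfolding facet_idx_def flipi_def by auto

lemma rv_self: "rv A r r = 1" unfolding rv_def by simp

lemma Psi_facet:
  assumes i: "facet_idx n i" and k: "facet_idx n k" and ik: "i \<noteq> -k"
  shows "Psi n A k (facet n i) = facet n (flipi (rv A (nat \<bar>k\<bar>)) i)"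
proof (cases "i = k")
  case True
  then show ?thesis unfolding Psi_def flipi_def by (simp add: rv_self)
next
  case False
  have ne: "nat \<bar>i\<bar> \<noteq> nat \<bar>k\<bar>" using False ik by auto
  have nf: "facet n i \<noteq> facet n k" using facet_inj[OF i k] False by auto
  let ?i' = "flipi (rv A (nat \<bar>k\<bar>)) i"
  have i': "facet_idx n ?i'" using facet_idx_flipi[OF i] .
  have absi': "nat \<bar>?i'\<bar> = nat \<bar>i\<bar>" unfolding flipi_def by auto
  have i0: "i \<noteq> 0" "k \<noteq> 0" "?i' \<noteq> 0" using i k i' unfolding facet_idx_def by auto
  let ?D = "{nat \<bar>i\<bar>, nat \<bar>k\<bar>}"
  have D: "?D \<subseteq> {1..n}" using facet_idx_range[OF i] facet_idx_range[OF k] by auto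
  let ?sig = "\<lambda>m. if m = nat \<bar>i\<bar> then of_int (sgn ?i') else (of_int (sgn (-k)) :: real)"
  have tgt: "facet n ?i' \<inter> facet n (-k) = face n ?D ?sig"
    using facet_inter[of ?i' "-k" n] ne absi' by simp
  have img: "tau n A k ` (facet n i \<inter> facet n k) = face n ?D ?sig"
  proof -
    have "tau n A k ` (facet n i \<inter> facet n k) = flipv n (rv A (nat \<bar>k\<bar>)) `
       face n ?D (\<lambda>m. if m = nat \<bar>i\<bar> then of_int (sgn i) else of_int (sgn k))"
      using tau_eq[OF k] facet_inter[OF ne] by simp
    also have "\<dots> = face n ?D (fs (rv A (nat \<bar>k\<bar>)) (\<lambda>m. if m = nat \<bar>i\<bar> then of_int (sgn i) else of_int (sgn k)))"
      by (rule flip_face[OF D])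
    also have "\<dots> = face n ?D ?sig"
      by (rule face_cong) (use ne in \<open>auto simp: fs_def flipi_def rv_self sgn_minus\<close>)
    finally show ?thesis .
  qed
  have sigok: "sgnok ?D ?sig" using sgnok2 i0 by (metis neg_equal_0_iff_equal)
  have "(THE G. G \<in> facets n \<and> G \<inter> facet n (-k) = tau n A k ` (facet n i \<inter> facet n k)) = facet n ?i'"
  proof (rule the_equality)
    show "facet n ?i' \<in> facets n \<and> facet n ?i' \<inter> facet n (-k) = tau n A k ` (facet n i \<inter> facet n k)"
      using i' tgt img unfolding facets_def by auto
  next
    fix G assume G: "G \<in> facets n \<and> G \<inter> facet n (-k) = tau n A k ` (facet n i \<inter> facet n k)"
    then obtain g where g: "facet_idx n g" "G = facet n g" unfolding facets_def by auto
    have eqG: "facet n g \<inter> facet n (-k) = face n ?D ?sig" using G g img by simp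
    have g0: "g \<noteq> 0" using g unfolding facet_idx_def by auto
    show "G = facet n ?i'"
    proof (cases "nat \<bar>g\<bar> = nat \<bar>k\<bar>")
      case True
      then consider "g = k" | "g = -k" by (cases "g > 0"; cases "k > 0") auto
      then show ?thesis
      proof cases
        case 1
        have "facet n g \<inter> facet n (-k) = {}" using 1 i0 unfolding facet_def by (cases "k > 0") auto
        then show ?thesis using eqG face_ne[OF D sigok] by simp
      next
        case 2
        have "facet n g \<inter> facet n (-k) = face n {nat \<bar>k\<bar>} (\<lambda>_. of_int (sgn (-k)))"
          using 2 facet_as_face[of n "-k"] by simp
        then have "face n {nat \<bar>k\<bar>} (\<lambda>_. of_int (sgn (-k))) = face n ?D ?sig" using eqG by simp
        then have "{nat \<bar>k\<bar>} = ?D"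
          using face_eq[of "{nat \<bar>k\<bar>}" n "\<lambda>_. of_int (sgn (-k))" ?D ?sig] D sigok sgnok_sgn[of "-k"] i0
          by auto
        then show ?thesis using ne by auto
      qed
    next
      case False
      have "facet n g \<inter> facet n (-k) = face n {nat \<bar>g\<bar>, nat \<bar>k\<bar>}
         (\<lambda>m. if m = nat \<bar>g\<bar> then of_int (sgn g) else of_int (sgn (-k)))"
        using facet_inter[of g "-k" n] False by simp
      then have fe: "face n {nat \<bar>g\<bar>, nat \<bar>k\<bar>} (\<lambda>m. if m = nat \<bar>g\<bar> then of_int (sgn g) else of_int (sgn (-k))) = face n ?D ?sig"
        using eqG by simp
      have Dg: "{nat \<bar>g\<bar>, nat \<bar>k\<bar>} \<subseteq> {1..n}" using facet_idx_range[OF g(1)] facet_idx_range[OF k] by auto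
      have okg: "sgnok {nat \<bar>g\<bar>, nat \<bar>k\<bar>} (\<lambda>m. if m = nat \<bar>g\<bar> then of_int (sgn g) else (of_int (sgn (-k))::real))"
        using sgnok2 g0 i0 by (metis neg_equal_0_iff_equal)
      have r: "{nat \<bar>g\<bar>, nat \<bar>k\<bar>} = ?D \<and> (\<forall>m\<in>{nat \<bar>g\<bar>, nat \<bar>k\<bar>}.
          (if m = nat \<bar>g\<bar> then of_int (sgn g) else (of_int (sgn (-k))::real)) = ?sig m)"
        by (rule face_eq[OF Dg okg D sigok fe])
      then have ag: "nat \<bar>g\<bar> = nat \<bar>i\<bar>" using False by auto
      then have "(of_int (sgn g) :: real) = of_int (sgn ?i')" using r by auto
      then have "g = ?i'" using int_eq_sgn[of g ?i'] g0 i0 ag absi' by auto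
      then show ?thesis using g by simp
    qed
  qed
  then show ?thesis unfolding Psi_def using nf by simp
qed

lemma flipi_flipi: "flipi v (flipi w i) = flipi (\<lambda>m. w m + v m) i"
  unfolding flipi_def by (cases "v (nat \<bar>i\<bar>)"; cases "w (nat \<bar>i\<bar>)") auto

lemma comp_Psi_eq:
  assumes "D \<subseteq> {1..n}" "sgnok D s" "valid_comp n A ks (face n D s)"
    "facet_idx n i" "nat \<bar>i\<bar> \<in> D" "s (nat \<bar>i\<bar>) = of_int (sgn i)"
  shows "comp_Psi n A ks (facet n i) = facet n (flipi (svn A (map (\<lambda>k. nat \<bar>k\<bar>) ks)) i)"
  using assms
proof (induction ks arbitrary: s i)
  case Nil then show ?case by (simp add: flipi_def)
next
  case (Cons k ks)
  have k: "facet_idx n k" "face n D s \<subseteq> facet n k"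
    and v: "valid_comp n A ks (tau n A k ` face n D s)" using Cons.prems by auto
  have kD: "nat \<bar>k\<bar> \<in> D" "s (nat \<bar>k\<bar>) = of_int (sgn k)"
    using face_sub_facet[OF Cons.prems(1,2) k(1)] k(2) by auto
  have ik: "i \<noteq> -k"
  proof
    assume "i = -k"
    then have "s (nat \<bar>k\<bar>) = of_int (sgn (-k))" using Cons.prems(6) by simp
    then show False using kD(2) k(1) unfolding facet_idx_def by (cases "k > 0") auto
  qed
  let ?s1 = "fs (rv A (nat \<bar>k\<bar>)) s"
  let ?i1 = "flipi (rv A (nat \<bar>k\<bar>)) i"
  have img: "tau n A k ` face n D s = face n D ?s1"
    using tau_eq[OF k(1)] flip_face[OF Cons.prems(1)] by simp
  have i1: "facet_idx n ?i1" "nat \<bar>?i1\<bar> \<in> D" "?s1 (nat \<bar>?i1\<bar>) = of_int (sgn ?i1)"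
    using facet_idx_flipi[OF Cons.prems(4)] Cons.prems(5,6) unfolding flipi_def fs_def by (auto simp: sgn_minus)
  have "comp_Psi n A (k # ks) (facet n i) = comp_Psi n A ks (facet n ?i1)"
    using Psi_facet[OF Cons.prems(4) k(1) ik] by simp
  also have "\<dots> = facet n (flipi (svn A (map (\<lambda>k. nat \<bar>k\<bar>) ks)) ?i1)"
    using Cons.IH[of ?s1 ?i1] Cons.prems(1) sgnok_fs[OF Cons.prems(2)] v img i1 by auto
  also have "flipi (svn A (map (\<lambda>k. nat \<bar>k\<bar>) ks)) ?i1 = flipi (svn A (map (\<lambda>k. nat \<bar>k\<bar>) (k # ks))) i"
    unfolding flipi_flipi by simp
  finally show ?case .
qed



fun cnt :: "nat list \<Rightarrow> nat \<Rightarrow> bit" where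
  "cnt [] d = 0"
| "cnt (x # xs) d = (if x = d then 1 else 0) + cnt xs d"

lemma svn_sum:
  assumes "finite J" "set ds \<subseteq> Suc ` J"
  shows "svn A ds (Suc b) = (\<Sum>j\<in>J. cnt ds (Suc j) * rv A (Suc j) (Suc b))"
  using assms(2)
proof (induction ds)
  case Nil then show ?case by simp
next
  case (Cons d ds)
  obtain j0 where j0: "j0 \<in> J" "d = Suc j0" using Cons.prems by auto
  have IH: "svn A ds (Suc b) = (\<Sum>j\<in>J. cnt ds (Suc j) * rv A (Suc j) (Suc b))" using Cons by auto
  have "(\<Sum>j\<in>J. cnt (d # ds) (Suc j) * rv A (Suc j) (Suc b)) =
      (\<Sum>j\<in>J. (if j = j0 then rv A (Suc j) (Suc b) else 0) + cnt ds (Suc j) * rv A (Suc j) (Suc b))"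
    by (rule sum.cong) (auto simp: j0 distrib_right simp del: add_bit_eq_xor mult_bit_eq_and)
  also have "\<dots> = (\<Sum>j\<in>J. (if j = j0 then rv A (Suc j) (Suc b) else 0)) + (\<Sum>j\<in>J. cnt ds (Suc j) * rv A (Suc j) (Suc b))"
    by (rule sum.distrib)
  also have "(\<Sum>j\<in>J. (if j = j0 then rv A (Suc j) (Suc b) else 0)) = rv A d (Suc b)"
    using sum.delta[OF assms(1), of j0 "\<lambda>j. rv A (Suc j) (Suc b)"] j0 by simp
  finally show ?case using IH by (simp del: add_bit_eq_xor mult_bit_eq_and)
qed

lemma cnt_distinct: "distinct ds \<Longrightarrow> cnt ds d = (if d \<in> set ds then 1 else 0)"
  by (induction ds) auto

lemma rv_At:
  assumes "A \<in> carrier_mat n n" "\<forall>i<n. A $$ (i, i) = 0" "j < n" "b < n"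
  shows "rv A (Suc j) (Suc b) = (A + 1\<^sub>m n) $$ (j, b)"
  using assms unfolding rv_def ent_def by auto

lemma bit_add_self: "(x::bit) + x = 0" by (cases x) auto
lemma bit_add_eq0: "(x::bit) + y = 0 \<Longrightarrow> x = y" by (cases x; cases y) auto

theorem mainTheorem13:
  fixes n :: nat and A :: "bit mat"
  assumes "A \<in> carrier_mat n n"
    and "\<forall>i<n. A $$ (i, i) = 0"
  shows "strong n A \<longleftrightarrow>
    (\<forall>J. J \<subseteq> {..<n} \<and> J \<noteq> {} \<longrightarrow>
       vec_space.rank (card J) (submatrix (A + 1\<^sub>m n) J J)
       = vec_space.rank (card J) (submatrix (A + 1\<^sub>m n) J {..<n}))"
proof -
  let ?At = "A + 1\<^sub>m n"
  have At: "?At \<in> carrier_mat n n" using assms(1) by auto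
  have RA: "\<And>J. J \<subseteq> {..<n} \<Longrightarrow> (vec_space.rank (card J) (submatrix ?At J J)
       = vec_space.rank (card J) (submatrix ?At J {..<n})) \<longleftrightarrow>
     (\<forall>c::nat \<Rightarrow> bit. (\<forall>b\<in>J. (\<Sum>j\<in>J. c j * ?At $$ (j, b)) = 0) \<longrightarrow> (\<forall>b<n. (\<Sum>j\<in>J. c j * ?At $$ (j, b)) = 0))"
    using rank_eq_iff_fun[OF At] by blast
  have rvA: "\<And>j b. j < n \<Longrightarrow> b < n \<Longrightarrow> rv A (Suc j) (Suc b) = ?At $$ (j, b)"
    using rv_At[OF assms] by blast
  show ?thesis
  proof
    assume st: "strong n A"
    show "\<forall>J. J \<subseteq> {..<n} \<and> J \<noteq> {} \<longrightarrow>
       vec_space.rank (card J) (submatrix ?At J J) = vec_space.rank (card J) (submatrix ?At J {..<n})"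
    proof (intro allI impI)
      fix J assume J: "J \<subseteq> {..<n} \<and> J \<noteq> {}"
      have finJ: "finite J" using J finite_subset by blast
      show "vec_space.rank (card J) (submatrix ?At J J) = vec_space.rank (card J) (submatrix ?At J {..<n})"
        unfolding RA[OF conjunct1[OF J]]
      proof (intro allI impI)
        fix c :: "nat \<Rightarrow> bit" and b
        assume h: "\<forall>b\<in>J. (\<Sum>j\<in>J. c j * ?At $$ (j, b)) = 0" and b: "b < n"
        define D where "D = Suc ` J"
        define s where "s = (\<lambda>_::nat. 1::real)"
        define f where "f = face n D s"
        have D: "D \<subseteq> {1..n}" "D \<noteq> {}" using J unfolding D_def by auto
        have sok: "sgnok D s" unfolding sgnok_def s_def by auto
        have pf: "proper_face n f" unfolding proper_face_def f_def face_def
          using D sok unfolding sgnok_def by blast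
        define ds where "ds = map Suc (sorted_list_of_set {j\<in>J. c j = 1})"
        have dsd: "distinct ds" unfolding ds_def by (simp add: distinct_map)
        have dss: "set ds = Suc ` {j\<in>J. c j = 1}" unfolding ds_def using finJ by simp
        have dsD: "set ds \<subseteq> D" unfolding dss D_def by auto
        obtain ks where ks: "valid_comp n A ks f" "map (\<lambda>k. nat \<bar>k\<bar>) ks = ds"
          using valid_exists[OF D(1) sok dsD] unfolding f_def by blast
        have idx: "\<forall>k\<in>set ks. facet_idx n k" using valid_idx[OF D(1) sok] ks(1) unfolding f_def by blast
        have ct: "comp_tau n A ks = flipv n (svn A ds)" using comp_tau_eq[OF idx] ks(2) by simp
        have vS: "\<And>b. b < n \<Longrightarrow> svn A ds (Suc b) = (\<Sum>j\<in>J. c j * ?At $$ (j, b))"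
        proof -
          fix b assume b: "b < n"
          have "svn A ds (Suc b) = (\<Sum>j\<in>J. cnt ds (Suc j) * rv A (Suc j) (Suc b))"
            using svn_sum[OF finJ] dsD unfolding D_def by blast
          also have "\<dots> = (\<Sum>j\<in>J. c j * ?At $$ (j, b))"
          proof (rule sum.cong)
            fix j assume j: "j \<in> J"
            have "cnt ds (Suc j) = c j" using cnt_distinct[OF dsd] dss j by (cases "c j") auto
            then show "cnt ds (Suc j) * rv A (Suc j) (Suc b) = c j * ?At $$ (j, b)"
              using rvA[of j b] j J b by auto
          qed simp
          finally show "svn A ds (Suc b) = (\<Sum>j\<in>J. c j * ?At $$ (j, b))" .
        qed
        have zD: "\<forall>i\<in>D. svn A ds i = 0"
        proof
          fix i assume "i \<in> D"
          then obtain b' where b': "b' \<in> J" "i = Suc b'" unfolding D_def by auto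
          then show "svn A ds i = 0" using vS[of b'] h J by auto
        qed
        have "comp_tau n A ks ` f = f"
          unfolding ct f_def flip_face[OF D(1)] by (rule face_cong) (use zD in \<open>auto simp: fs_def\<close>)
        then have "comp_tau n A ks ` f = comp_tau n A [] ` f" by simp
        then have "\<forall>x\<in>f. comp_tau n A ks x = comp_tau n A [] x"
          using st pf ks(1) unfolding strong_def by (metis valid_comp.simps(1))
        then have "\<forall>x\<in>face n D s. flipv n (svn A ds) x = x" using ct unfolding f_def by simp
        then have "\<forall>i\<in>{1..n}. svn A ds i = 0" using flip_id_face[OF D(1) sok] by blast
        then show "(\<Sum>j\<in>J. c j * ?At $$ (j, b)) = 0" using vS[OF b] b by auto
      qed
    qed
  next
    assume R: "\<forall>J. J \<subseteq> {..<n} \<and> J \<noteq> {} \<longrightarrow>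
       vec_space.rank (card J) (submatrix ?At J J) = vec_space.rank (card J) (submatrix ?At J {..<n})"
    show "strong n A" unfolding strong_def
    proof (intro allI impI)
      fix f ks ks'
      assume H: "proper_face n f \<and> valid_comp n A ks f \<and> valid_comp n A ks' f \<and> comp_tau n A ks ` f = comp_tau n A ks' ` f"
      obtain D s where Ds: "D \<subseteq> {1..n}" "D \<noteq> {}" "\<forall>i\<in>D. s i = (1::real) \<or> s i = -1"
        "f = {x \<in> cube n. \<forall>i\<in>D. x i = s i / 4}"
        using H unfolding proper_face_def by blast
      have f: "f = face n D s" using Ds(4) unfolding face_def .
      have sok: "sgnok D s" using Ds(3) unfolding sgnok_def .
      define J where "J = (\<lambda>d. d - 1) ` D"
      have DJ: "D = Suc ` J" unfolding J_def using Ds(1) by (force simp: image_iff)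
      have J: "J \<subseteq> {..<n}" "J \<noteq> {}" unfolding J_def using Ds(1,2) by (fastforce simp: subset_iff)+
      have finJ: "finite J" using J finite_subset by blast
      have FC: "\<forall>c::nat \<Rightarrow> bit. (\<forall>b\<in>J. (\<Sum>j\<in>J. c j * ?At $$ (j, b)) = 0) \<longrightarrow> (\<forall>b<n. (\<Sum>j\<in>J. c j * ?At $$ (j, b)) = 0)"
        using R RA[OF J(1)] J by blast
      have v1: "valid_comp n A ks (face n D s)" and v2: "valid_comp n A ks' (face n D s)" using H f by auto
      have idx1: "\<forall>k\<in>set ks. facet_idx n k \<and> nat \<bar>k\<bar> \<in> D" using valid_idx[OF Ds(1) sok v1] .
      have idx2: "\<forall>k\<in>set ks'. facet_idx n k \<and> nat \<bar>k\<bar> \<in> D" using valid_idx[OF Ds(1) sok v2] .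
      define l1 where "l1 = map (\<lambda>k. nat \<bar>k\<bar>) ks"
      define l2 where "l2 = map (\<lambda>k. nat \<bar>k\<bar>) ks'"
      have l1D: "set l1 \<subseteq> Suc ` J" using idx1 DJ unfolding l1_def by auto
      have l2D: "set l2 \<subseteq> Suc ` J" using idx2 DJ unfolding l2_def by auto
      have ct1: "comp_tau n A ks = flipv n (svn A l1)" using comp_tau_eq idx1 unfolding l1_def by blast
      have ct2: "comp_tau n A ks' = flipv n (svn A l2)" using comp_tau_eq idx2 unfolding l2_def by blast
      have "face n D (fs (svn A l1) s) = face n D (fs (svn A l2) s)"
        using H f ct1 ct2 flip_face[OF Ds(1)] by metis
      then have "\<forall>i\<in>D. fs (svn A l1) s i = fs (svn A l2) s i"
        using face_eq[OF Ds(1) sgnok_fs[OF sok] Ds(1) sgnok_fs[OF sok]] by blast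
      then have eqD: "\<forall>i\<in>D. svn A l1 i = svn A l2 i"
      proof (intro ballI)
        fix i assume e: "\<forall>i\<in>D. fs (svn A l1) s i = fs (svn A l2) s i" and i: "i \<in> D"
        have "s i = 1 \<or> s i = -1" using sok i unfolding sgnok_def by auto
        then show "svn A l1 i = svn A l2 i" using e i unfolding fs_def
          by (cases "svn A l1 i"; cases "svn A l2 i") auto
      qed
      define c where "c = (\<lambda>j. cnt l1 (Suc j) + cnt l2 (Suc j))"
      have sumc: "\<And>b. b < n \<Longrightarrow> (\<Sum>j\<in>J. c j * ?At $$ (j, b)) = svn A l1 (Suc b) + svn A l2 (Suc b)"
      proof -
        fix b assume b: "b < n"
        have "(\<Sum>j\<in>J. c j * ?At $$ (j, b)) = (\<Sum>j\<in>J. cnt l1 (Suc j) * rv A (Suc j) (Suc b) + cnt l2 (Suc j) * rv A (Suc j) (Suc b))"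
          by (rule sum.cong) (use J b rvA in \<open>auto simp: c_def distrib_right simp del: add_bit_eq_xor mult_bit_eq_and\<close>)
        also have "\<dots> = svn A l1 (Suc b) + svn A l2 (Suc b)"
          unfolding sum.distrib svn_sum[OF finJ l1D] svn_sum[OF finJ l2D] ..
        finally show "(\<Sum>j\<in>J. c j * ?At $$ (j, b)) = svn A l1 (Suc b) + svn A l2 (Suc b)" .
      qed
      have "\<forall>b\<in>J. (\<Sum>j\<in>J. c j * ?At $$ (j, b)) = 0"
      proof
        fix b assume b: "b \<in> J"
        then have "b < n" "Suc b \<in> D" using J DJ by auto
        then show "(\<Sum>j\<in>J. c j * ?At $$ (j, b)) = 0" using sumc eqD bit_add_self by metis
      qed
      then have all0: "\<forall>b<n. (\<Sum>j\<in>J. c j * ?At $$ (j, b)) = 0" using FC by blast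
      have eqall: "\<forall>i\<in>{1..n}. svn A l1 i = svn A l2 i"
      proof
        fix i assume i: "i \<in> {1..n}"
        then obtain b where b: "i = Suc b" "b < n" by (cases i) auto
        show "svn A l1 i = svn A l2 i" using all0 sumc[OF b(2)] b bit_add_eq0 by metis
      qed
      have fv: "flipv n (svn A l1) = flipv n (svn A l2)"
        unfolding flipv_def using eqall by (auto simp: fun_eq_iff)
      show "(\<forall>x\<in>f. comp_tau n A ks x = comp_tau n A ks' x) \<and> (\<forall>F\<in>Xi n f. comp_Psi n A ks F = comp_Psi n A ks' F)"
      proof (intro conjI ballI)
        fix x assume "x \<in> f"
        show "comp_tau n A ks x = comp_tau n A ks' x" using ct1 ct2 fv by simp
      next
        fix F assume F: "F \<in> Xi n f"
        then obtain i where i: "facet_idx n i" "F = facet n i" "f \<subseteq> facet n i"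
          unfolding Xi_def facets_def by auto
        have iD: "nat \<bar>i\<bar> \<in> D" "s (nat \<bar>i\<bar>) = of_int (sgn i)"
          using face_sub_facet[OF Ds(1) sok i(1)] i(3) f by auto
        have "comp_Psi n A ks F = facet n (flipi (svn A l1) i)"
          using comp_Psi_eq[OF Ds(1) sok v1 i(1) iD] i(2) unfolding l1_def by simp
        moreover have "comp_Psi n A ks' F = facet n (flipi (svn A l2) i)"
          using comp_Psi_eq[OF Ds(1) sok v2 i(1) iD] i(2) unfolding l2_def by simp
        moreover have "flipi (svn A l1) i = flipi (svn A l2) i"
          using eqD iD(1) unfolding flipi_def by simp
        ultimately show "comp_Psi n A ks F = comp_Psi n A ks' F" by simp
      qed
    qed
  qed
qed

end
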